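(* Let $q$ be a power of an odd prime, $0<r_1<r_2<n$ integers, $a_1,a_2\in\mathbb{F}_{q^n}^*$ with the multiplicative order of $a_2$ dividing $q^{r_1}-1$, and $S(x)=a_1x^{q^{r_1}}+a_2x^{q^{r_2}}$. Then for each $t\in\{r_1,r_2\}$, $S(x)$ is a scattered polynomial of index $t$ over $\mathbb{F}_{q^n}$ if and only if $\gcd(r_2-r_1,n)=1$.
   Context: An $\mathbb{F}_q$-linearized polynomial $S\in\mathbb{F}_{q^n}[x]$ is a scattered polynomial of index $t$ over $\mathbb{F}_{q^n}$ if for all $y,z\in\mathbb{F}_{q^n}^*$, $\frac{S(y)}{y^{q^t}}=\frac{S(z)}{z^{q^t}}$ implies $y/z\in\mathbb{F}_q$. *)

theory Defs
  imports "HOL-Computational_Algebra.Primes"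
begin

definition mult_order :: "'a::field \<Rightarrow> nat" where
  "mult_order a = (LEAST k. 0 < k \<and> a ^ k = 1)"

text \<open>The subfield F_q of F_{q^n}: the fixed points of the q-Frobenius.\<close>
definition subfield_q :: "nat \<Rightarrow> 'a::field set" where
  "subfield_q q = {x. x ^ q = x}"

text \<open>S is scattered of index t over F_{q^n} (the ambient finite field type).\<close>
definition scattered :: "nat \<Rightarrow> ('a::field \<Rightarrow> 'a) \<Rightarrow> nat \<Rightarrow> bool" where
  "scattered q S t \<longleftrightarrow>
     (\<forall>y z. y \<noteq> 0 \<longrightarrow> z \<noteq> 0 \<longrightarrow> S y / y ^ (q ^ t) = S z / z ^ (q ^ t)
        \<longrightarrow> y / z \<in> subfield_q q)"

end

theory Submission
  imports Defs "HOL-Computational_Algebra.Polynomial"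
begin

lemma fin_fermat:
  fixes x :: "'a::{field,finite}"
  shows "x ^ card (UNIV::'a set) = x"
proof (cases "x = 0")
  case True
  have "card (UNIV::'a set) > 0" by (simp add: finite_UNIV_card_ge_0)
  then show ?thesis using True by (simp add: zero_power)
next
  case False
  let ?U = "UNIV - {0::'a}"
  have inj: "inj_on (\<lambda>y. x * y) ?U" using False by (auto simp: inj_on_def)
  have im: "(\<lambda>y. x * y) ` ?U = ?U"
  proof
    show "(\<lambda>y. x * y) ` ?U \<subseteq> ?U" using False by auto
    show "?U \<subseteq> (\<lambda>y. x * y) ` ?U"
    proof
      fix y assume "y \<in> ?U"
      then have "y = x * (y / x)" "y / x \<in> ?U" using False by auto
      then show "y \<in> (\<lambda>y. x * y) ` ?U" by blast
    qed
  qed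
  have "prod id ?U = prod id ((\<lambda>y. x * y) ` ?U)" using im by simp
  also have "\<dots> = prod (\<lambda>y. x * y) ?U" using prod.reindex[OF inj] by simp
  also have "\<dots> = x ^ card ?U * prod id ?U" by (simp add: prod.distrib)
  finally have "prod id ?U = x ^ card ?U * prod id ?U" .
  moreover have "prod id ?U \<noteq> 0" by (simp add: prod_zero_iff)
  ultimately have "x ^ card ?U = 1" by simp
  moreover have "card ?U = card (UNIV::'a set) - 1" by (simp add: card_Diff_singleton)
  moreover have "card (UNIV::'a set) > 0" by (simp add: finite_UNIV_card_ge_0)
  ultimately show ?thesis
    by (metis One_nat_def Suc_pred mult.right_neutral power_Suc)
qed

lemma frob_inj:
  fixes x y :: "'a::field"
  assumes F: "\<forall>x::'a. x ^ (q ^ n) = x" and "r \<le> n" and "x ^ (q ^ r) = y ^ (q ^ r)"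
  shows "x = y"
proof -
  have e: "q ^ n = q ^ r * q ^ (n - r)" using assms(2) by (simp add: power_add[symmetric])
  have "x = (x ^ (q ^ r)) ^ (q ^ (n - r))" using F e by (metis power_mult)
  also have "\<dots> = (y ^ (q ^ r)) ^ (q ^ (n - r))" using assms(3) by simp
  also have "\<dots> = y" using F e by (metis power_mult)
  finally show ?thesis .
qed

lemma fix_add:
  fixes w :: "'a::field"
  assumes "w ^ (q ^ a) = w" "w ^ (q ^ b) = w"
  shows "w ^ (q ^ (a + b)) = w"
  using assms by (simp add: power_add power_mult)

lemma fix_mult:
  fixes w :: "'a::field"
  assumes "w ^ (q ^ a) = w"
  shows "w ^ (q ^ (a * m)) = w"
proof (induction m)
  case 0 then show ?case by simp
next
  case (Suc m)
  have "a * Suc m = a * m + a" by simp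
  then show ?case using fix_add[OF Suc.IH assms] by metis
qed

lemma nat_geom:
  fixes Q :: nat assumes "Q \<ge> 1"
  shows "Q ^ m - 1 = (Q - 1) * (\<Sum>i<m. Q ^ i)"
proof -
  have "int Q ^ m - 1 = (int Q - 1) * (\<Sum>i<m. int Q ^ i)" by (rule power_diff_1_eq)
  moreover have "Q ^ m \<ge> 1" using assms by simp
  ultimately have "int (Q ^ m - 1) = int ((Q - 1) * (\<Sum>i<m. Q ^ i))"
    using assms by (simp add: of_nat_diff)
  then show ?thesis by (simp only: of_nat_eq_iff)
qed

lemma exists_nonfix:
  fixes q n g :: nat
  assumes card: "card (UNIV::'a::{field,finite} set) = q ^ n" and q2: "q \<ge> 2"
    and gn: "g dvd n" and g1: "g > 1" and n0: "n > 0"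
  shows "\<exists>w::'a. w ^ (q ^ g) = w \<and> w ^ q \<noteq> w"
proof -
  define Q where "Q = q ^ g"
  obtain m where nm: "n = g * m" using gn by blast
  have m1: "m \<ge> 1" using nm n0 by (cases m) auto
  have Q1: "Q \<ge> 1" using q2 by (simp add: Q_def)
  have qQ: "q < Q"
  proof -
    have "q ^ 1 < q ^ g" using q2 g1 by (intro power_strict_increasing) auto
    then show ?thesis by (simp add: Q_def)
  qed
  have cardQ: "card (UNIV::'a set) = Q ^ m" using card nm by (simp add: Q_def power_mult)
  define K where "K = (\<Sum>i<m. Q ^ i)"
  have geo: "Q ^ m - 1 = (Q - 1) * K" unfolding K_def by (rule nat_geom[OF Q1])
  have K1: "K \<ge> 1"
  proof -
    have "Q ^ 0 \<le> K" unfolding K_def using m1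
      by (intro member_le_sum) auto
    then show ?thesis by simp
  qed
  have Qm: "Q ^ m = 1 + (Q - 1) * K" using geo one_le_power[OF Q1, of m] by linarith
  define H :: "'a poly" where "H = (\<Sum>j<K. monom 1 ((Q - 1) * j))"
  have polyH: "poly H x = (\<Sum>j<K. (x ^ (Q - 1)) ^ j)" for x
    unfolding H_def by (simp add: poly_sum poly_monom power_mult)
  have fact: "x ^ (Q ^ m) - x = (x ^ Q - x) * poly H x" for x :: 'a
  proof -
    let ?y = "x ^ (Q - 1)"
    have a: "x ^ (Q ^ m) = x * ?y ^ K" by (simp add: Qm power_mult[symmetric])
    have "Q = Suc (Q - 1)" using Q1 by simp
    then have b: "x ^ Q = x * ?y" by (metis power_Suc)
    have c: "?y ^ K - 1 = (?y - 1) * (\<Sum>j<K. ?y ^ j)" by (rule power_diff_1_eq)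
    have "x * ?y ^ K - x = x * (?y ^ K - 1)" by (simp add: right_diff_distrib)
    also have "\<dots> = x * ((?y - 1) * (\<Sum>j<K. ?y ^ j))" using c by simp
    also have "\<dots> = (x * ?y - x) * (\<Sum>j<K. ?y ^ j)" by (simp add: algebra_simps)
    finally show ?thesis unfolding a b polyH .
  qed
  have Hnz: "H \<noteq> 0"
  proof -
    have "coeff H 0 = (\<Sum>j<K. if (Q - 1) * j = 0 then 1 else 0)"
      unfolding H_def by (simp add: coeff_sum coeff_monom)
    also have "\<dots> = (\<Sum>j<K. if j = 0 then 1 else 0)"
      using qQ q2 by (intro sum.cong) (auto simp: mult_eq_0_iff)
    also have "\<dots> = (1::'a)" using K1 by simp
    finally show ?thesis by auto
  qed
  have degH: "degree H \<le> (Q - 1) * (K - 1)"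
    unfolding H_def
  proof (rule degree_sum_le)
    fix j assume "j \<in> {..<K}"
    then have "j \<le> K - 1" by auto
    then have "(Q - 1) * j \<le> (Q - 1) * (K - 1)" by (rule mult_le_mono2)
    then show "degree (monom (1::'a) ((Q - 1) * j)) \<le> (Q - 1) * (K - 1)"
      using degree_monom_le order.trans by blast
  qed simp
  let ?A = "{x::'a. x ^ Q = x}"
  let ?R = "{x::'a. poly H x = 0}"
  have "UNIV \<subseteq> ?A \<union> ?R"
  proof
    fix x :: 'a
    have "x ^ (Q ^ m) = x" using fin_fermat[of x] cardQ by simp
    then have "(x ^ Q - x) * poly H x = 0" using fact[of x] by simp
    then show "x \<in> ?A \<union> ?R" by auto
  qed
  then have "card (UNIV::'a set) \<le> card (?A \<union> ?R)" by (simp add: card_mono)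
  also have "\<dots> \<le> card ?A + card ?R" by (rule card_Un_le)
  also have "card ?R \<le> (Q - 1) * (K - 1)" using card_poly_roots_bound[OF Hnz] degH by simp
  finally have "Q ^ m \<le> card ?A + (Q - 1) * (K - 1)" using cardQ by simp
  moreover have "(Q - 1) * K = (Q - 1) * (K - 1) + (Q - 1)"
  proof -
    have "K = (K - 1) + 1" using K1 by simp
    then have "(Q - 1) * K = (Q - 1) * ((K - 1) + 1)" by simp
    then show ?thesis by (simp add: distrib_left)
  qed
  ultimately have cA: "card ?A \<ge> Q" using Qm Q1 by linarith
  define B :: "'a poly" where "B = monom 1 q - [:0, 1:]"
  have polyB: "poly B x = x ^ q - x" for x unfolding B_def by (simp add: poly_monom)
  have Bnz: "B \<noteq> 0"
  proof -
    have "coeff B q = 1" unfolding B_def using q2 by (simp add: coeff_pCons split: nat.split)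
    then show ?thesis by auto
  qed
  have degB: "degree B \<le> q" unfolding B_def
    using degree_diff_le[of "monom (1::'a) q" q "[:0,1:]"] q2 by (simp add: degree_monom_le)
  have cB: "card {x::'a. x ^ q = x} \<le> q"
    using card_poly_roots_bound[OF Bnz] degB polyB by simp
  have "\<not> ?A \<subseteq> {x::'a. x ^ q = x}"
  proof
    assume "?A \<subseteq> {x::'a. x ^ q = x}"
    then have "card ?A \<le> card {x::'a. x ^ q = x}" by (simp add: card_mono)
    then show False using cA cB qQ by linarith
  qed
  then show ?thesis unfolding Q_def by auto
qed

lemma ratio_eq:
  fixes y z c e :: "'a::field"
  assumes y: "y \<noteq> 0" and z: "z \<noteq> 0" and e: "e \<noteq> 0"
  shows "(c * y ^ A + e * y ^ B) / y ^ A = (c * z ^ A + e * z ^ B) / z ^ A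
         \<longleftrightarrow> (y / z) ^ B = (y / z) ^ A"
proof -
  have l: "(c * y ^ A + e * y ^ B) / y ^ A = c + e * (y ^ B / y ^ A)" if "y \<noteq> 0" for y :: 'a
    using that by (simp add: field_simps)
  have "(c * y ^ A + e * y ^ B) / y ^ A = (c * z ^ A + e * z ^ B) / z ^ A
        \<longleftrightarrow> y ^ B / y ^ A = z ^ B / z ^ A" using e y z by (simp add: l times_divide_eq_right[symmetric] del: times_divide_eq_right)
  also have "\<dots> \<longleftrightarrow> y ^ B * z ^ A = z ^ B * y ^ A" using y z by (simp add: frac_eq_eq)
  also have "\<dots> \<longleftrightarrow> (y / z) ^ B = (y / z) ^ A" using y z
    by (simp add: power_divide frac_eq_eq mult.commute)
  finally show ?thesis .
qed

theorem mainTheorem8: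
  fixes a1 a2 :: "'a::{field, finite}"
    and p k q n r1 r2 :: nat
  assumes "prime p" and "odd p" and "k > 0" and "q = p ^ k"
    and "card (UNIV :: 'a set) = q ^ n"
    and "0 < r1" and "r1 < r2" and "r2 < n"
    and "a1 \<noteq> 0" and "a2 \<noteq> 0"
    and "mult_order a2 dvd q ^ r1 - 1"
  shows "\<forall>t \<in> {r1, r2}.
           scattered q (\<lambda>x. a1 * x ^ (q ^ r1) + a2 * x ^ (q ^ r2)) t
             \<longleftrightarrow> gcd (r2 - r1) n = 1"
proof -
  have p2: "p \<ge> 2" using assms(1) by (rule prime_ge_2_nat)
  have q2: "q \<ge> 2"
  proof -
    have "p ^ 1 \<le> p ^ k" using p2 assms(3) by (intro power_increasing) auto
    then show ?thesis using p2 assms(4) by simp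
  qed
  have F: "\<forall>x::'a. x ^ (q ^ n) = x"
  proof
    fix x :: 'a
    have "x ^ card (UNIV::'a set) = x" by (rule fin_fermat)
    then show "x ^ (q ^ n) = x" using assms(5) by simp
  qed
  define d where "d = r2 - r1"
  have r2d: "r2 = d + r1" using assms(7) d_def by simp
  have key1: "w ^ (q ^ r2) = w ^ (q ^ r1) \<longleftrightarrow> w ^ (q ^ d) = w" for w :: 'a
  proof -
    have "w ^ (q ^ r2) = (w ^ (q ^ d)) ^ (q ^ r1)" unfolding r2d by (simp add: power_add power_mult)
    moreover have "r1 \<le> n" using assms by simp
    ultimately show ?thesis using frob_inj[OF F, of r1 "w ^ (q ^ d)" w] by auto
  qed
  let ?S = "\<lambda>x::'a. a1 * x ^ (q ^ r1) + a2 * x ^ (q ^ r2)"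
  have key2: "?S y / y ^ (q ^ t) = ?S z / z ^ (q ^ t) \<longleftrightarrow> (y / z) ^ (q ^ d) = y / z"
    if t: "t \<in> {r1, r2}" and y: "y \<noteq> 0" and z: "z \<noteq> 0" for t y z
  proof -
    have "?S y / y ^ (q ^ t) = ?S z / z ^ (q ^ t) \<longleftrightarrow> (y / z) ^ (q ^ r2) = (y / z) ^ (q ^ r1)"
    proof (cases "t = r1")
      case True
      then show ?thesis using ratio_eq[OF y z assms(10), of a1 "q ^ r1" "q ^ r2"] by simp
    next
      case False
      then have "t = r2" using t by simp
      then show ?thesis using ratio_eq[OF y z assms(9), of a2 "q ^ r2" "q ^ r1"]
        by (auto simp: add.commute)
    qed
    then show ?thesis using key1 by simp
  qed
  have scat: "scattered q ?S t \<longleftrightarrow> (\<forall>w::'a. w ^ (q ^ d) = w \<longrightarrow> w ^ q = w)"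
    if t: "t \<in> {r1, r2}" for t
  proof
    assume sc: "scattered q ?S t"
    show "\<forall>w::'a. w ^ (q ^ d) = w \<longrightarrow> w ^ q = w"
    proof (intro allI impI)
      fix w :: 'a assume w: "w ^ (q ^ d) = w"
      show "w ^ q = w"
      proof (cases "w = 0")
        case True then show ?thesis using q2 by simp
      next
        case False
        have "?S w / w ^ (q ^ t) = ?S 1 / 1 ^ (q ^ t)"
          by (subst key2[OF t False one_neq_zero]) (simp only: div_by_1 w)
        then have "w / 1 \<in> subfield_q q"
          by (rule sc[unfolded scattered_def, rule_format, OF False one_neq_zero])
        then show ?thesis by (simp add: subfield_q_def)
      qed
    qed
  next
    assume H: "\<forall>w::'a. w ^ (q ^ d) = w \<longrightarrow> w ^ q = w"
    show "scattered q ?S t" unfolding scattered_def subfield_q_def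
    proof (intro allI impI)
      fix y z :: 'a assume y: "y \<noteq> 0" and z: "z \<noteq> 0"
        and e: "?S y / y ^ (q ^ t) = ?S z / z ^ (q ^ t)"
      have "(y / z) ^ (q ^ d) = y / z" using e key2[OF t y z] by (simp only:)
      then have "(y / z) ^ q = y / z" using H by (simp only:)
      then show "y / z \<in> {x. x ^ q = x}" by (simp only: mem_Collect_eq)
    qed
  qed
  have n0: "n > 0" using assms by simp
  have d0: "d \<noteq> 0" using assms d_def by simp
  have main: "(\<forall>w::'a. w ^ (q ^ d) = w \<longrightarrow> w ^ q = w) \<longleftrightarrow> gcd d n = 1"
  proof
    assume H: "\<forall>w::'a. w ^ (q ^ d) = w \<longrightarrow> w ^ q = w"
    show "gcd d n = 1"
    proof (rule ccontr)
      assume "gcd d n \<noteq> 1"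
      moreover have "gcd d n \<noteq> 0" using n0 by simp
      ultimately have g1: "gcd d n > 1" by linarith
      obtain w :: 'a where w: "w ^ (q ^ gcd d n) = w" "w ^ q \<noteq> w"
        using exists_nonfix[OF assms(5) q2 _ g1 n0] by auto
      obtain c where c: "d = gcd d n * c" by (rule dvdE[OF gcd_dvd1[of d n]])
      have "w ^ (q ^ d) = w" using fix_mult[OF w(1), of c] c by simp
      then show False using H w(2) by blast
    qed
  next
    assume g: "gcd d n = 1"
    show "\<forall>w::'a. w ^ (q ^ d) = w \<longrightarrow> w ^ q = w"
    proof (intro allI impI)
      fix w :: 'a assume w: "w ^ (q ^ d) = w"
      obtain x y where b: "d * x = n * y + 1" using bezout_nat[OF d0, of n] g by auto
      have wn: "w ^ (q ^ n) = w" using F by blast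
      have "w ^ (q ^ (d * x)) = w" by (rule fix_mult[OF w])
      moreover have "w ^ (q ^ (n * y)) = w" by (rule fix_mult[OF wn])
      ultimately have e1: "w ^ (q ^ (n * y + 1)) = w" and e2: "w ^ (q ^ (n * y)) = w"
        by (simp_all only: b)
      have "w ^ (q ^ (n * y + 1)) = (w ^ (q ^ (n * y))) ^ q"
        by (simp only: power_add power_one_right power_mult)
      then show "w ^ q = w" by (simp only: e1 e2)
    qed
  qed
  show ?thesis unfolding d_def[symmetric]
  proof
    fix t assume t: "t \<in> {r1, r2}"
    show "scattered q ?S t \<longleftrightarrow> gcd d n = 1" by (simp only: scat[OF t] main)
  qed
qed

end
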